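(* Let $C_{(\mathcal T,\Psi_{\mathcal T})}$ be a nested Archimedean copula with regularly varying generators, with tree $\mathcal T$ and generators $\psi_v\in\Psi_\infty$, regularly varying with index $-\alpha_v$, $\alpha_v>0$, $v\in\mathcal I$. Recursively define, for $v\in\mathcal V$, $$\Lambda_v(\bm x_{\mathrm{le}(v)})=\begin{cases}x_v,& v\in\mathcal L,\\ \left(\sum_{w\in\mathrm{ch}(v)}\Lambda_w(\bm x_{\mathrm{le}(w)})^{-1/\alpha_v}\right)^{-\alpha_v},& v\in\mathcal I.\end{cases}$$ Then for every $v\in\mathcal V$, the copula $C_v$ admits the tail copula $\Lambda(\cdot;C_v)=\Lambda_v(\cdot)$ on $(0,\infty)^{d(v)}$.
   Context: An Archimedean generator is a continuous, decreasing $\psi:[0,\infty)\to[0,1]$ with $\psi(0)=1$, $\lim_{t\to\infty}\psi(t)=0$, strictly decreasing on $[0,\inf\{t:\psi(t)=0\}]$, with inverse $\psi^{-1}$ ($\psi^{-1}(0)=\inf\{t:\psi(t)=0\}$); $\Psi_\infty$ is the set of completely monotone ones ($(-1)^k\psi^{(k)}\ge0$ for all $k$). $f:(0,\infty)\to(0,\infty)$ is regularly varying with index $\rho$ if $\lim_{x\to\infty}f(tx)/f(x)=t^\rho$ for all $t>0$. Let $\mathcal T=(\mathcal V,\mathcal E)$ be a rooted tree with root $r$, leaf set $\mathcal L=\{1,\dots,d\}$, internal vertices $\mathcal I=\mathcal V\setminus\mathcal L$; $\mathrm{pa}(v)$ is the parent of $v$, $\mathrm{ch}(v)$ the set of children,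 $\mathrm{le}(v)$ the set of leaves of the subtree rooted at $v$ (with $\mathrm{le}(v)=\{v\}$ for leaves), $d(v)=|\mathrm{le}(v)|$. Given generators $\Psi_{\mathcal T}=\{\psi_v\}_{v\in\mathcal I}\subseteq\Psi_\infty$, recursively set $C_v(\bm u_{\mathrm{le}(v)})=u_v$ for $v\in\mathcal L$ and $C_v(\bm u_{\mathrm{le}(v)})=\psi_v\left(\sum_{w\in\mathrm{ch}(v)}\psi_v^{-1}(C_w(\bm u_{\mathrm{le}(w)}))\right)$ for $v\in\mathcal I$; the nested Archimedean copula is $C_{(\mathcal T,\Psi_{\mathcal T})}=C_r$. It is assumed that the sufficient nesting condition holds: $(\psi_{\mathrm{pa}(v)}^{-1}\circ\psi_v)'$ is completely monotone for every $v\in\mathcal I\setminus\{r\}$. It has regularly varying generators if each $\psi_v$, $v\in\mathcal I$, is regularly varying with index $-\alpha_v$ for some $\alpha_v>0$. The tail copula of a copula $C$ in dimension $k$ is $\Lambda(\bm x;C)=\lim_{t\downarrow0}C(t\bm x)/t$, $\bm x\in(0,\infty)^k$. *)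

theory Defs
  imports "HOL-Analysis.Analysis"
begin

text \<open>A rooted tree on the finite vertex set V with root r: every non-root vertex has
its parent in V and every vertex reaches the root by iterating the parent map
(this excludes cycles). The value of pa at the root is irrelevant.\<close>

definition is_rooted_tree :: "'a set \<Rightarrow> 'a \<Rightarrow> ('a \<Rightarrow> 'a) \<Rightarrow> bool" where
  "is_rooted_tree V r pa \<longleftrightarrow> finite V \<and> r \<in> V \<and> (\<forall>v\<in>V - {r}. pa v \<in> V)
     \<and> (\<forall>v\<in>V. \<exists>n. (pa ^^ n) v = r)"

definition children :: "'a set \<Rightarrow> 'a \<Rightarrow> ('a \<Rightarrow> 'a) \<Rightarrow> 'a \<Rightarrow> 'a set" where
  "children V r pa v = {w \<in> V. w \<noteq> r \<and> pa w = v}"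

definition leaves :: "'a set \<Rightarrow> 'a \<Rightarrow> ('a \<Rightarrow> 'a) \<Rightarrow> 'a set" where
  "leaves V r pa = {v \<in> V. children V r pa v = {}}"

definition internal :: "'a set \<Rightarrow> 'a \<Rightarrow> ('a \<Rightarrow> 'a) \<Rightarrow> 'a set" where
  "internal V r pa = V - leaves V r pa"

definition leaves_below :: "'a set \<Rightarrow> 'a \<Rightarrow> ('a \<Rightarrow> 'a) \<Rightarrow> 'a \<Rightarrow> 'a set" where
  "leaves_below V r pa v = {l \<in> leaves V r pa. \<exists>n. (pa ^^ n) l = v}"

text \<open>The fuel argument is
taken to be card V, which exceeds the height of every vertex.\<close>
fun tree_rec :: "nat \<Rightarrow> ('a \<Rightarrow> 'a set) \<Rightarrow> ('a \<Rightarrow> ('a \<Rightarrow> real) \<Rightarrow> real)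
                 \<Rightarrow> ('a \<Rightarrow> real) \<Rightarrow> 'a \<Rightarrow> real" where
  "tree_rec 0 ch comb x v = x v"
| "tree_rec (Suc n) ch comb x v =
     (if ch v = {} then x v else comb v (tree_rec n ch comb x))"

definition gen_inv :: "(real \<Rightarrow> real) \<Rightarrow> real \<Rightarrow> real" where
  "gen_inv \<psi> y = (if y = 0 then Inf {t. 0 \<le> t \<and> \<psi> t = 0}
                   else (THE t. 0 \<le> t \<and> \<psi> t = y))"

definition archimedean_generator :: "(real \<Rightarrow> real) \<Rightarrow> bool" where
  "archimedean_generator \<psi> \<longleftrightarrow>
     continuous_on {0..} \<psi> \<and> (\<forall>t\<ge>0. 0 \<le> \<psi> t \<and> \<psi> t \<le> 1) \<and> \<psi> 0 = 1
     \<and> (\<psi> \<longlongrightarrow> 0) at_top \<and> antimono_on {0..} \<psi>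
     \<and> strict_antimono_on
         (if {t. 0 \<le> t \<and> \<psi> t = 0} = {} then {0..}
          else {0..Inf {t. 0 \<le> t \<and> \<psi> t = 0}}) \<psi>"

definition completely_monotone :: "(real \<Rightarrow> real) \<Rightarrow> bool" where
  "completely_monotone f \<longleftrightarrow>
     (\<forall>k. \<forall>t>0. ((deriv ^^ k) f has_real_derivative (deriv ^^ Suc k) f t) (at t))
     \<and> (\<forall>k. \<forall>t>0. (-1) ^ k * (deriv ^^ k) f t \<ge> 0)"

definition nesting_condition :: "(real \<Rightarrow> real) \<Rightarrow> (real \<Rightarrow> real) \<Rightarrow> bool" where
  "nesting_condition \<phi> \<psi> \<longleftrightarrow>
     (\<forall>t>0. ((\<lambda>s. gen_inv \<phi> (\<psi> s)) has_real_derivative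
              deriv (\<lambda>s. gen_inv \<phi> (\<psi> s)) t) (at t))
     \<and> completely_monotone (deriv (\<lambda>s. gen_inv \<phi> (\<psi> s)))"

definition regularly_varying :: "(real \<Rightarrow> real) \<Rightarrow> real \<Rightarrow> bool" where
  "regularly_varying f \<rho> \<longleftrightarrow> (\<forall>x>0. f x > 0) \<and>
     (\<forall>t>0. ((\<lambda>x. f (t * x) / f x) \<longlongrightarrow> t powr \<rho>) at_top)"

definition nac :: "'a set \<Rightarrow> 'a \<Rightarrow> ('a \<Rightarrow> 'a) \<Rightarrow> ('a \<Rightarrow> real \<Rightarrow> real)
                   \<Rightarrow> 'a \<Rightarrow> ('a \<Rightarrow> real) \<Rightarrow> real" where
  "nac V r pa \<psi> v u = tree_rec (card V) (children V r pa)
     (\<lambda>v g. \<psi> v (\<Sum>w\<in>children V r pa v. gen_inv (\<psi> v) (g w))) u v"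

definition tail_nac :: "'a set \<Rightarrow> 'a \<Rightarrow> ('a \<Rightarrow> 'a) \<Rightarrow> ('a \<Rightarrow> real)
                   \<Rightarrow> 'a \<Rightarrow> ('a \<Rightarrow> real) \<Rightarrow> real" where
  "tail_nac V r pa \<alpha> v x = tree_rec (card V) (children V r pa)
     (\<lambda>v g. (\<Sum>w\<in>children V r pa v. g w powr (-1 / \<alpha> v)) powr (- \<alpha> v)) x v"

end

theory Submission
  imports Defs
begin

lemma gen_basic:
  assumes g: "archimedean_generator \<psi>" and pos: "\<forall>x>0. \<psi> x > 0"
  shows "strict_antimono_on {0..} \<psi>" "antimono_on {0..} \<psi>" "\<psi> 0 = 1"
    "\<forall>t\<ge>0. \<psi> t \<le> 1" "continuous_on {0..} \<psi>" "(\<psi> \<longlongrightarrow> 0) at_top"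
proof -
  have p0: "\<psi> 0 = 1" using g by (simp add: archimedean_generator_def)
  have "{t. 0 \<le> t \<and> \<psi> t = 0} = {}"
  proof (intro equals0I)
    fix t assume "t \<in> {t. 0 \<le> t \<and> \<psi> t = 0}"
    then have t: "0 \<le> t" "\<psi> t = 0" by auto
    show False
    proof (cases "t = 0")
      case True then show ?thesis using t p0 by simp
    next
      case False
      then have "t > 0" using t by simp
      then have "\<psi> t > 0" using pos by blast
      then show ?thesis using t by simp
    qed
  qed
  then show "strict_antimono_on {0..} \<psi>" using g unfolding archimedean_generator_def by simp
qed (use g in \<open>auto simp: archimedean_generator_def\<close>)

lemma gen_sdec:
  assumes g: "archimedean_generator \<psi>" and pos: "\<forall>x>0. \<psi> x > 0"
    and "0 \<le> a" "a < b"
  shows "\<psi> b < \<psi> a"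
  using gen_basic(1)[OF g pos] assms(3,4) unfolding monotone_on_def by auto

lemma gen_inj:
  assumes g: "archimedean_generator \<psi>" and pos: "\<forall>x>0. \<psi> x > 0"
    and "0 \<le> a" "0 \<le> b" "\<psi> a = \<psi> b"
  shows "a = b"
proof (cases a b rule: linorder_cases)
  case less then show ?thesis using gen_sdec[OF g pos, of a b] assms by auto
next
  case greater then show ?thesis using gen_sdec[OF g pos, of b a] assms by auto
qed

lemma gen_dec:
  assumes g: "archimedean_generator \<psi>" and pos: "\<forall>x>0. \<psi> x > 0"
    and "0 \<le> a" "a \<le> b"
  shows "\<psi> b \<le> \<psi> a"
  using gen_sdec[OF g pos, of a b] assms by (cases "a = b") auto

lemma gen_inv_prop:
  assumes g: "archimedean_generator \<psi>" and pos: "\<forall>x>0. \<psi> x > 0"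
    and y: "0 < y" "y \<le> 1"
  shows "0 \<le> gen_inv \<psi> y \<and> \<psi> (gen_inv \<psi> y) = y"
proof -
  note b = gen_basic[OF g pos]
  obtain T where T: "T \<ge> 0" "\<psi> T < y"
  proof -
    have "\<forall>\<^sub>F x in at_top. \<psi> x < y" using b(6) y(1) by (rule order_tendstoD)
    then obtain T0 where "\<forall>x\<ge>T0. \<psi> x < y" by (auto simp: eventually_at_top_linorder)
    then show ?thesis using that[of "max T0 0"] by auto
  qed
  have "continuous_on {0..T} \<psi>" using b(5) by (rule continuous_on_subset) auto
  then obtain s where s: "0 \<le> s" "s \<le> T" "\<psi> s = y"
    using IVT2'[of \<psi> T y 0] T y b(3) by auto
  have uniq: "\<And>u. 0 \<le> u \<and> \<psi> u = y \<Longrightarrow> u = s"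
    using gen_inj[OF g pos] s by blast
  have "(THE t. 0 \<le> t \<and> \<psi> t = y) = s"
    by (rule the_equality[OF _ uniq]) (use s in simp)
  then show ?thesis using y s unfolding gen_inv_def by auto
qed

lemma gen_inv_psi:
  assumes g: "archimedean_generator \<psi>" and pos: "\<forall>x>0. \<psi> x > 0" and "0 \<le> s"
  shows "gen_inv \<psi> (\<psi> s) = s"
proof -
  note b = gen_basic[OF g pos]
  have y: "0 < \<psi> s" "\<psi> s \<le> 1" using pos assms(3) b(3,4) by (cases "s = 0", auto)
  from gen_inv_prop[OF g pos y] show ?thesis
    using gen_inj[OF g pos, of "gen_inv \<psi> (\<psi> s)" s] assms(3) by auto
qed

lemma gen_inv_sdec:
  assumes g: "archimedean_generator \<psi>" and pos: "\<forall>x>0. \<psi> x > 0"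
    and "0 < y1" "y1 < y2" "y2 \<le> 1"
  shows "gen_inv \<psi> y2 < gen_inv \<psi> y1"
proof (rule ccontr)
  assume "\<not> ?thesis"
  then have "gen_inv \<psi> y1 \<le> gen_inv \<psi> y2" by simp
  moreover have "0 \<le> gen_inv \<psi> y1 \<and> \<psi> (gen_inv \<psi> y1) = y1"
    by (rule gen_inv_prop[OF g pos]) (use assms in auto)
  moreover have "0 \<le> gen_inv \<psi> y2 \<and> \<psi> (gen_inv \<psi> y2) = y2"
    by (rule gen_inv_prop[OF g pos]) (use assms in auto)
  ultimately show False using gen_dec[OF g pos, of "gen_inv \<psi> y1" "gen_inv \<psi> y2"] assms by auto
qed

lemma gen_inv_at_top:
  assumes g: "archimedean_generator \<psi>" and pos: "\<forall>x>0. \<psi> x > 0"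
  shows "filterlim (gen_inv \<psi>) at_top (at_right 0)"
  unfolding filterlim_at_top
proof
  fix Z :: real
  define Z' where "Z' = max Z 0 + 1"
  have y0: "\<psi> Z' > 0" using pos Z'_def by auto
  have ev: "\<forall>\<^sub>F t in at_right (0::real). 0 < t \<and> t < min (\<psi> Z') 1"
    using y0 by (auto simp: eventually_at_right_field intro: exI[of _ "min (\<psi> Z') 1"])
  show "\<forall>\<^sub>F t in at_right 0. Z \<le> gen_inv \<psi> t"
    using ev
  proof eventually_elim
    case (elim t)
    then have p: "0 \<le> gen_inv \<psi> t \<and> \<psi> (gen_inv \<psi> t) = t"
      by (intro gen_inv_prop[OF g pos]) auto
    show ?case
    proof (rule ccontr)
      assume "\<not> Z \<le> gen_inv \<psi> t"
      then have "gen_inv \<psi> t \<le> Z'" unfolding Z'_def by auto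
      then have "\<psi> Z' \<le> t" using gen_dec[OF g pos, of "gen_inv \<psi> t" Z'] p by auto
      then show False using elim by auto
    qed
  qed
qed


lemma rv_ratio:
  fixes g :: "real \<Rightarrow> real" and X Y :: "'b \<Rightarrow> real"
  assumes pos: "\<forall>x>0. g x > 0" and mono: "\<And>a b. 0 \<le> a \<Longrightarrow> a \<le> b \<Longrightarrow> g b \<le> g a"
    and rv: "\<forall>c>0. ((\<lambda>x. g (c*x) / g x) \<longlongrightarrow> c powr (-\<alpha>)) at_top" and al: "\<alpha> > 0"
    and X: "filterlim X at_top F" and Y: "((\<lambda>t. Y t / X t) \<longlongrightarrow> c) F" and c: "c > 0"
  shows "((\<lambda>t. g (Y t) / g (X t)) \<longlongrightarrow> c powr (-\<alpha>)) F"
proof -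
  have Xp: "\<forall>\<^sub>F t in F. X t > 0" using X by (simp add: filterlim_at_top_dense)
  have "\<forall>\<^sub>F t in F. Y t / X t > 0" using Y c by (rule order_tendstoD)
  with Xp have Yp: "\<forall>\<^sub>F t in F. Y t > 0"
    by eventually_elim (auto simp: zero_less_divide_iff)
  have comp: "((\<lambda>t. g (d * X t) / g (X t)) \<longlongrightarrow> d powr (-\<alpha>)) F" if "d > 0" for d
    using filterlim_compose[OF rv[rule_format, OF that] X] .
  have inv: "(a powr (-1/\<alpha>)) powr (-\<alpha>) = a" if "a > 0" for a
    using that al by (simp add: powr_powr)
  have neg: "-1/\<alpha> < 0" "-\<alpha> < 0" using al by auto
  show ?thesis
  proof (rule order_tendstoI)
    fix a assume a: "a < c powr (-\<alpha>)"
    show "\<forall>\<^sub>F t in F. a < g (Y t) / g (X t)"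
    proof (cases "a \<le> 0")
      case True
      from Xp Yp show ?thesis
      proof eventually_elim
        case (elim t)
        then have "g (Y t) / g (X t) > 0" using pos by simp
        then show ?case using True by linarith
      qed
    next
      case False
      define c' where "c' = a powr (-1/\<alpha>)"
      have "(c powr (-\<alpha>)) powr (-1/\<alpha>) < c'"
        unfolding c'_def using False a al by (intro powr_less_mono2_neg) (use neg in auto)
      then have cc': "c < c'" using c al by (simp add: powr_powr)
      define c'' where "c'' = (c + c') / 2"
      have c'': "c < c''" "c'' < c'" "c'' > 0" using cc' c unfolding c''_def by auto
      have "c' powr (-\<alpha>) < c'' powr (-\<alpha>)" using c'' al by (intro powr_less_mono2_neg) (use neg in auto)
      then have ac: "a < c'' powr (-\<alpha>)" unfolding c'_def using inv False by simp
      have e1: "\<forall>\<^sub>F t in F. Y t / X t < c''" using Y c''(1) by (rule order_tendstoD)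
      have e2: "\<forall>\<^sub>F t in F. a < g (c'' * X t) / g (X t)" using comp[OF c''(3)] ac by (rule order_tendstoD)
      from Xp Yp e1 e2 show ?thesis
      proof eventually_elim
        case (elim t)
        have "Y t \<le> c'' * X t" using elim by (simp add: divide_less_eq)
        then have "g (c'' * X t) \<le> g (Y t)" using mono elim by auto
        then have "g (c'' * X t) / g (X t) \<le> g (Y t) / g (X t)"
          using pos elim by (intro divide_right_mono) (auto intro: less_imp_le)
        then show ?case using elim by linarith
      qed
    qed
  next
    fix a assume a: "a > c powr (-\<alpha>)"
    have a0: "a > 0" using a c by (meson le_less_trans powr_ge_zero)
    define c' where "c' = a powr (-1/\<alpha>)"
    have "c' < (c powr (-\<alpha>)) powr (-1/\<alpha>)"
      unfolding c'_def using a0 a al c by (intro powr_less_mono2_neg) (use neg in auto)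
    then have cc': "c' < c" using c al by (simp add: powr_powr)
    have c'0: "c' > 0" unfolding c'_def using a0 by simp
    define c'' where "c'' = (c + c') / 2"
    have c'': "c'' < c" "c' < c''" "c'' > 0" using cc' c c'0 unfolding c''_def by auto
    have "c'' powr (-\<alpha>) < c' powr (-\<alpha>)" using c'' c'0 al by (intro powr_less_mono2_neg) (use neg in auto)
    then have ac: "c'' powr (-\<alpha>) < a" unfolding c'_def using inv a0 by simp
    have e1: "\<forall>\<^sub>F t in F. c'' < Y t / X t" using Y c''(1) by (rule order_tendstoD)
    have e2: "\<forall>\<^sub>F t in F. g (c'' * X t) / g (X t) < a" using comp[OF c''(3)] ac by (rule order_tendstoD)
    from Xp Yp e1 e2 show "\<forall>\<^sub>F t in F. g (Y t) / g (X t) < a"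
    proof eventually_elim
      case (elim t)
      have "c'' * X t \<le> Y t" using elim by (simp add: less_divide_eq)
      then have "g (Y t) \<le> g (c'' * X t)" using mono elim c'' by auto
      then have "g (Y t) / g (X t) \<le> g (c'' * X t) / g (X t)"
        using pos elim by (intro divide_right_mono) (auto intro: less_imp_le)
      then show ?case using elim by linarith
    qed
  qed
qed


lemma inv_ratio:
  assumes g: "archimedean_generator \<psi>" and rv: "regularly_varying \<psi> (-\<alpha>)" and al: "\<alpha> > 0"
    and A: "((\<lambda>t. a t / t) \<longlongrightarrow> L) (at_right 0)" and L: "L > 0"
  shows "((\<lambda>t. gen_inv \<psi> (a t) / gen_inv \<psi> t) \<longlongrightarrow> L powr (-1/\<alpha>)) (at_right 0)"
proof -
  have pos: "\<forall>x>0. \<psi> x > 0" and rvl: "\<forall>c>0. ((\<lambda>x. \<psi> (c*x) / \<psi> x) \<longlongrightarrow> c powr (-\<alpha>)) at_top"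
    using rv unfolding regularly_varying_def by auto
  note b = gen_basic[OF g pos]
  define \<phi> where "\<phi> = gen_inv \<psi>"
  have X: "filterlim \<phi> at_top (at_right 0)" unfolding \<phi>_def by (rule gen_inv_at_top[OF g pos])
  have Xp: "\<forall>\<^sub>F t in at_right 0. \<phi> t > 0" using X by (simp add: filterlim_at_top_dense)
  have tsmall: "\<forall>\<^sub>F t in at_right (0::real). 0 < t \<and> t < 1"
    by (auto simp: eventually_at_right_field intro: exI[of _ 1])
  have ta: "\<forall>\<^sub>F t in at_right 0. \<psi> (\<phi> t) = t"
    using tsmall by eventually_elim (use gen_inv_prop[OF g pos] in \<open>auto simp: \<phi>_def\<close>)
  have "\<forall>\<^sub>F t in at_right 0. a t / t > 0" using A L by (rule order_tendstoD)
  with tsmall have ap: "\<forall>\<^sub>F t in at_right 0. a t > 0"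
    by eventually_elim (auto simp: zero_less_divide_iff)
  have "((\<lambda>t. a t / t * t) \<longlongrightarrow> L * 0) (at_right 0)"
    by (intro tendsto_mult A) (simp add: tendsto_ident_at)
  then have "((\<lambda>t. a t / t * t) \<longlongrightarrow> 0) (at_right 0)" by simp
  moreover have "\<forall>\<^sub>F t in at_right 0. a t / t * t = a t" using tsmall by eventually_elim auto
  ultimately have "(a \<longlongrightarrow> 0) (at_right 0)"
    by (rule Lim_transform_eventually)
  then have "\<forall>\<^sub>F t in at_right 0. a t < 1" by (rule order_tendstoD) simp
  with ap have a1: "\<forall>\<^sub>F t in at_right 0. 0 < a t \<and> a t < 1" by eventually_elim auto
  have comp: "((\<lambda>t. \<psi> (d * \<phi> t) / t) \<longlongrightarrow> d powr (-\<alpha>)) (at_right 0)" if "d > 0" for d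
  proof -
    have "((\<lambda>t. \<psi> (d * \<phi> t) / \<psi> (\<phi> t)) \<longlongrightarrow> d powr (-\<alpha>)) (at_right 0)"
      using filterlim_compose[OF rvl[rule_format, OF that] X] .
    moreover have "\<forall>\<^sub>F t in at_right 0. \<psi> (d * \<phi> t) / \<psi> (\<phi> t) = \<psi> (d * \<phi> t) / t"
      using ta by eventually_elim auto
    ultimately show ?thesis
      by (rule Lim_transform_eventually)
  qed
  have inv: "(x powr (-1/\<alpha>)) powr (-\<alpha>) = x" if "x > 0" for x
    using that al by (simp add: powr_powr)
  have neg: "-1/\<alpha> < 0" "-\<alpha> < 0" using al by auto
  define lam where "lam = L powr (-1/\<alpha>)"
  have lp: "lam > 0" unfolding lam_def using L by simp
  have lL: "lam powr (-\<alpha>) = L" unfolding lam_def using inv L by simp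
  have phipsi: "\<phi> (\<psi> s) = s" if "s \<ge> 0" for s
    unfolding \<phi>_def using gen_inv_psi[OF g pos that] .
  have phi_sdec: "\<phi> y2 < \<phi> y1" if "0 < y1" "y1 < y2" "y2 \<le> 1" for y1 y2
    unfolding \<phi>_def using gen_inv_sdec[OF g pos that] .
  have psi1: "\<psi> s \<le> 1" "\<psi> s > 0" if "s > 0" for s using b(4) pos that by auto
  show ?thesis unfolding lam_def[symmetric] \<phi>_def[symmetric]
  proof (rule order_tendstoI)
    fix c assume c: "c > lam"
    define c' where "c' = (lam + c) / 2"
    have c': "lam < c'" "c' < c" using c unfolding c'_def by auto
    have "c' powr (-\<alpha>) < lam powr (-\<alpha>)" using c' lp neg by (intro powr_less_mono2_neg) auto
    then have "c' powr (-\<alpha>) < L" using lL by simp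
    have "\<forall>\<^sub>F t in at_right 0. \<psi> (c' * \<phi> t) / t - a t / t < 0"
      by (rule order_tendstoD(2)[OF tendsto_diff[OF comp[of c'] A]]) (use c' lp \<open>c' powr (-\<alpha>) < L\<close> in auto)
    with Xp tsmall a1 show "\<forall>\<^sub>F t in at_right 0. \<phi> (a t) / \<phi> t < c"
    proof eventually_elim
      case (elim t)
      have "\<psi> (c' * \<phi> t) < a t" using elim by (simp add: diff_divide_distrib[symmetric] divide_less_0_iff)
      moreover have "c' * \<phi> t > 0" using elim c' lp by simp
      ultimately have "\<phi> (a t) < \<phi> (\<psi> (c' * \<phi> t))"
        using phi_sdec psi1 elim by auto
      also have "\<dots> = c' * \<phi> t" using phipsi \<open>c' * \<phi> t > 0\<close> by simp
      also have "\<dots> < c * \<phi> t" using c' elim by simp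
      finally show ?case using elim by (simp add: divide_less_eq)
    qed
  next
    fix c assume c: "c < lam"
    show "\<forall>\<^sub>F t in at_right 0. c < \<phi> (a t) / \<phi> t"
    proof (cases "c \<le> 0")
      case True
      from Xp a1 show ?thesis
      proof eventually_elim
        case (elim t)
        have "\<phi> 1 < \<phi> (a t)" using phi_sdec elim by auto
        moreover have "\<phi> 1 = 0" using phipsi[of 0] b(3) by simp
        ultimately have "\<phi> (a t) / \<phi> t > 0" using elim by simp
        then show ?case using True by linarith
      qed
    next
      case False
      define c' where "c' = (lam + c) / 2"
      have c': "c' < lam" "c < c'" "c' > 0" using c False unfolding c'_def by auto
      have "lam powr (-\<alpha>) < c' powr (-\<alpha>)" using c' lp neg by (intro powr_less_mono2_neg) auto
      then have "L < c' powr (-\<alpha>)" using lL by simp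
      have "\<forall>\<^sub>F t in at_right 0. 0 < \<psi> (c' * \<phi> t) / t - a t / t"
        by (rule order_tendstoD(1)[OF tendsto_diff[OF comp[of c'] A]]) (use c' \<open>L < c' powr (-\<alpha>)\<close> in auto)
      with Xp tsmall a1 show ?thesis
      proof eventually_elim
        case (elim t)
        have "a t < \<psi> (c' * \<phi> t)" using elim
          by (simp add: diff_divide_distrib[symmetric] zero_less_divide_iff)
        moreover have "c' * \<phi> t > 0" using elim c' by simp
        ultimately have "\<phi> (\<psi> (c' * \<phi> t)) < \<phi> (a t)"
          using phi_sdec psi1 elim by auto
        moreover have "\<phi> (\<psi> (c' * \<phi> t)) = c' * \<phi> t" using phipsi \<open>c' * \<phi> t > 0\<close> by simp
        moreover have "c * \<phi> t < c' * \<phi> t" using c' elim by simp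
        ultimately have "c * \<phi> t < \<phi> (a t)" by linarith
        then show ?case using elim by (simp add: less_divide_eq)
      qed
    qed
  qed
qed


lemma key_lemma:
  assumes g: "archimedean_generator \<psi>" and rv: "regularly_varying \<psi> (-\<alpha>)" and al: "\<alpha> > 0"
    and W: "finite W" "W \<noteq> {}"
    and A: "\<forall>w\<in>W. ((\<lambda>t. a w t / t) \<longlongrightarrow> L w) (at_right 0)" and L: "\<forall>w\<in>W. L w > 0"
  shows "((\<lambda>t. \<psi> (\<Sum>w\<in>W. gen_inv \<psi> (a w t)) / t) \<longlongrightarrow> (\<Sum>w\<in>W. L w powr (-1/\<alpha>)) powr (-\<alpha>)) (at_right 0)"
proof -
  have pos: "\<forall>x>0. \<psi> x > 0" and rvl: "\<forall>c>0. ((\<lambda>x. \<psi> (c*x) / \<psi> x) \<longlongrightarrow> c powr (-\<alpha>)) at_top"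
    using rv unfolding regularly_varying_def by auto
  have X: "filterlim (gen_inv \<psi>) at_top (at_right 0)" by (rule gen_inv_at_top[OF g pos])
  have "((\<lambda>t. \<Sum>w\<in>W. gen_inv \<psi> (a w t) / gen_inv \<psi> t) \<longlongrightarrow> (\<Sum>w\<in>W. L w powr (-1/\<alpha>))) (at_right 0)"
  proof (rule tendsto_sum)
    fix w assume "w \<in> W"
    then show "((\<lambda>t. gen_inv \<psi> (a w t) / gen_inv \<psi> t) \<longlongrightarrow> L w powr (-1/\<alpha>)) (at_right 0)"
      using A L by (intro inv_ratio[OF g rv al]) auto
  qed
  then have Y: "((\<lambda>t. (\<Sum>w\<in>W. gen_inv \<psi> (a w t)) / gen_inv \<psi> t) \<longlongrightarrow> (\<Sum>w\<in>W. L w powr (-1/\<alpha>))) (at_right 0)"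
    by (simp only: sum_divide_distrib)
  have S: "(\<Sum>w\<in>W. L w powr (-1/\<alpha>)) > 0"
  proof (rule sum_pos[OF W])
    fix w assume "w \<in> W"
    then have "L w > 0" using L by auto
    then show "0 < L w powr (-1/\<alpha>)" by simp
  qed
  have "((\<lambda>t. \<psi> (\<Sum>w\<in>W. gen_inv \<psi> (a w t)) / \<psi> (gen_inv \<psi> t)) \<longlongrightarrow> (\<Sum>w\<in>W. L w powr (-1/\<alpha>)) powr (-\<alpha>)) (at_right 0)"
    by (rule rv_ratio[OF pos _ rvl al X Y S]) (rule gen_dec[OF g pos])
  moreover have "\<forall>\<^sub>F t in at_right 0. \<psi> (\<Sum>w\<in>W. gen_inv \<psi> (a w t)) / \<psi> (gen_inv \<psi> t) = \<psi> (\<Sum>w\<in>W. gen_inv \<psi> (a w t)) / t"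
  proof -
    have "\<forall>\<^sub>F t in at_right (0::real). 0 < t \<and> t < 1"
      by (auto simp: eventually_at_right_field intro: exI[of _ 1])
    then show ?thesis
    proof eventually_elim
      case (elim t)
      then have "\<psi> (gen_inv \<psi> t) = t" using gen_inv_prop[OF g pos, of t] by simp
      then show ?case by simp
    qed
  qed
  ultimately show ?thesis by (rule Lim_transform_eventually)
qed


definition dep :: "'a \<Rightarrow> ('a \<Rightarrow> 'a) \<Rightarrow> 'a \<Rightarrow> nat" where
  "dep r pa v = (LEAST k. (pa ^^ k) v = r)"

lemma dep_reach:
  assumes "is_rooted_tree V r pa" "v \<in> V"
  shows "(pa ^^ dep r pa v) v = r"
proof -
  have "\<exists>n. (pa ^^ n) v = r" using assms unfolding is_rooted_tree_def by blast
  then show ?thesis unfolding dep_def by (rule LeastI_ex)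
qed

lemma dep_min:
  assumes "k < dep r pa v"
  shows "(pa ^^ k) v \<noteq> r"
  using not_less_Least[of k "\<lambda>k. (pa ^^ k) v = r"] assms unfolding dep_def by blast

lemma dep_child:
  assumes tree: "is_rooted_tree V r pa" and w: "w \<in> children V r pa v"
  shows "dep r pa w = Suc (dep r pa v)"
proof -
  have wV: "w \<in> V" "w \<noteq> r" "pa w = v" using w unfolding children_def by auto
  have rw: "(pa ^^ dep r pa w) w = r" by (rule dep_reach[OF tree wV(1)])
  have "dep r pa w \<noteq> 0" using rw wV(2) by (metis funpow_0)
  then obtain m where m: "dep r pa w = Suc m" by (cases "dep r pa w") auto
  have "(pa ^^ m) v = r" using rw unfolding m funpow_Suc_right o_def wV(3) .
  then have le1: "dep r pa v \<le> m" unfolding dep_def by (rule Least_le)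
  have ex: "\<exists>n. (pa ^^ n) v = r" using \<open>(pa ^^ m) v = r\<close> by blast
  have "(pa ^^ dep r pa v) v = r" unfolding dep_def by (rule LeastI_ex[OF ex])
  then have "(pa ^^ Suc (dep r pa v)) w = r" unfolding funpow_Suc_right o_def wV(3) .
  then have "dep r pa w \<le> Suc (dep r pa v)" unfolding dep_def by (rule Least_le)
  then show ?thesis using le1 m by simp
qed

lemma dep_lt:
  assumes tree: "is_rooted_tree V r pa" and v: "v \<in> V"
  shows "dep r pa v < card V"
proof -
  define d where "d = dep r pa v"
  have fin: "finite V" using tree unfolding is_rooted_tree_def by simp
  have paV: "\<forall>u\<in>V - {r}. pa u \<in> V" using tree unfolding is_rooted_tree_def by simp
  have inV: "(pa ^^ i) v \<in> V" if "i \<le> d" for i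
    using that
  proof (induction i)
    case 0 then show ?case using v by simp
  next
    case (Suc i)
    then have "(pa ^^ i) v \<in> V" by simp
    moreover have "(pa ^^ i) v \<noteq> r" using dep_min[of i r pa v] Suc.prems unfolding d_def by simp
    ultimately show ?case using paV by simp
  qed
  have ne: "(pa ^^ i) v \<noteq> (pa ^^ j) v" if "i < j" "j \<le> d" for i j
  proof
    assume eq: "(pa ^^ i) v = (pa ^^ j) v"
    have "(pa ^^ (d - j + i)) v = (pa ^^ (d - j)) ((pa ^^ i) v)" by (simp add: funpow_add)
    also have "\<dots> = (pa ^^ (d - j)) ((pa ^^ j) v)" using eq by simp
    also have "\<dots> = (pa ^^ (d - j + j)) v" by (simp add: funpow_add)
    also have "d - j + j = d" using that by simp
    also have "(pa ^^ d) v = r" unfolding d_def by (rule dep_reach[OF tree v])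
    finally have "(pa ^^ (d - j + i)) v = r" .
    moreover have "d - j + i < d" using that by simp
    ultimately show False using dep_min[of "d - j + i" r pa v] unfolding d_def by simp
  qed
  have inj: "inj_on (\<lambda>i. (pa ^^ i) v) {..d}"
  proof (rule inj_onI)
    fix i j assume "i \<in> {..d}" "j \<in> {..d}" "(pa ^^ i) v = (pa ^^ j) v"
    then show "i = j" using ne[of i j] ne[of j i] by (cases i j rule: linorder_cases) auto
  qed
  have "card {..d} \<le> card V"
    by (rule card_inj_on_le[OF inj _ fin]) (use inV in auto)
  then show ?thesis unfolding d_def by simp
qed

lemma main_ind:
  fixes V :: "'a set" and r :: 'a and pa :: "'a \<Rightarrow> 'a"
    and \<psi> :: "'a \<Rightarrow> real \<Rightarrow> real" and \<alpha> :: "'a \<Rightarrow> real"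
  assumes tree: "is_rooted_tree V r pa"
    and gen: "\<forall>v\<in>internal V r pa. archimedean_generator (\<psi> v)"
    and rv: "\<forall>v\<in>internal V r pa. \<alpha> v > 0 \<and> regularly_varying (\<psi> v) (- \<alpha> v)"
  shows "\<forall>v\<in>V. card V \<le> n + dep r pa v \<longrightarrow> (\<forall>x. (\<forall>l\<in>leaves_below V r pa v. 0 < x l) \<longrightarrow>
     0 < tree_rec n (children V r pa) (\<lambda>v g. (\<Sum>w\<in>children V r pa v. g w powr (-1 / \<alpha> v)) powr (- \<alpha> v)) x v \<and>
     ((\<lambda>t. tree_rec n (children V r pa) (\<lambda>v g. \<psi> v (\<Sum>w\<in>children V r pa v. gen_inv (\<psi> v) (g w))) (\<lambda>l. t * x l) v / t)
       \<longlongrightarrow> tree_rec n (children V r pa) (\<lambda>v g. (\<Sum>w\<in>children V r pa v. g w powr (-1 / \<alpha> v)) powr (- \<alpha> v)) x v) (at_right 0))"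
proof (induction n)
  case 0
  have "\<not> (card V \<le> 0 + dep r pa v)" if "v \<in> V" for v using dep_lt[OF tree that] by simp
  then show ?case by blast
next
  case (Suc n)
  define ch where "ch = children V r pa"
  define cN where "cN = (\<lambda>v g. \<psi> v (\<Sum>w\<in>children V r pa v. gen_inv (\<psi> v) (g w)))"
  define cT where "cT = (\<lambda>v g. (\<Sum>w\<in>children V r pa v. g w powr (-1 / \<alpha> v)) powr (- \<alpha> v))"
  have IH: "\<And>w x. w \<in> V \<Longrightarrow> card V \<le> n + dep r pa w \<Longrightarrow> (\<forall>l\<in>leaves_below V r pa w. 0 < x l) \<Longrightarrow>
     0 < tree_rec n ch cT x w \<and> ((\<lambda>t. tree_rec n ch cN (\<lambda>l. t * x l) w / t) \<longlongrightarrow> tree_rec n ch cT x w) (at_right 0)"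
    using Suc.IH unfolding ch_def cN_def cT_def by blast
  have fin: "finite V" using tree unfolding is_rooted_tree_def by simp
  have "\<forall>v\<in>V. card V \<le> Suc n + dep r pa v \<longrightarrow> (\<forall>x. (\<forall>l\<in>leaves_below V r pa v. 0 < x l) \<longrightarrow>
     0 < tree_rec (Suc n) ch cT x v \<and>
     ((\<lambda>t. tree_rec (Suc n) ch cN (\<lambda>l. t * x l) v / t) \<longlongrightarrow> tree_rec (Suc n) ch cT x v) (at_right 0))"
  proof (intro ballI impI allI)
    fix v and x :: "'a \<Rightarrow> real" assume v: "v \<in> V" and dv: "card V \<le> Suc n + dep r pa v"
      and xp: "\<forall>l\<in>leaves_below V r pa v. 0 < x l"
    show "0 < tree_rec (Suc n) ch cT x v \<and>
         ((\<lambda>t. tree_rec (Suc n) ch cN (\<lambda>l. t * x l) v / t) \<longlongrightarrow> tree_rec (Suc n) ch cT x v) (at_right 0)"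
    proof (cases "ch v = {}")
      case True
      have "v \<in> leaves V r pa" using v True unfolding leaves_def ch_def by simp
      then have "v \<in> leaves_below V r pa v" unfolding leaves_below_def
        by (auto intro: exI[of _ 0])
      then have xv: "x v > 0" using xp by blast
      have ev: "\<forall>\<^sub>F t in at_right (0::real). x v = t * x v / t"
        by (auto simp: eventually_at_right_field intro: exI[of _ 1])
      have "((\<lambda>t. t * x v / t) \<longlongrightarrow> x v) (at_right 0)"
        by (rule Lim_transform_eventually[OF tendsto_const ev])
      then show ?thesis using True xv by simp
    next
      case False
      have vi: "v \<in> internal V r pa" using v False unfolding internal_def leaves_def ch_def by simp
      have g: "archimedean_generator (\<psi> v)" using gen vi by blast
      have al: "\<alpha> v > 0" and rvv: "regularly_varying (\<psi> v) (- \<alpha> v)" using rv vi by auto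
      have finC: "finite (ch v)" using fin unfolding ch_def children_def by simp
      have chi: "w \<in> V" "card V \<le> n + dep r pa w" "\<forall>l\<in>leaves_below V r pa w. 0 < x l"
        if "w \<in> ch v" for w
      proof -
        show "w \<in> V" using that unfolding ch_def children_def by simp
        show "card V \<le> n + dep r pa w" using dep_child[OF tree, of w v] that dv unfolding ch_def by simp
        have "leaves_below V r pa w \<subseteq> leaves_below V r pa v"
        proof
          fix l assume "l \<in> leaves_below V r pa w"
          then obtain k where "l \<in> leaves V r pa" "(pa ^^ k) l = w" unfolding leaves_below_def by blast
          moreover have "pa w = v" using that unfolding ch_def children_def by simp
          ultimately have "(pa ^^ Suc k) l = v" by simp
          then show "l \<in> leaves_below V r pa v" using \<open>l \<in> leaves V r pa\<close> unfolding leaves_below_def by blast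
        qed
        then show "\<forall>l\<in>leaves_below V r pa w. 0 < x l" using xp by blast
      qed
      have IHw: "0 < tree_rec n ch cT x w \<and> ((\<lambda>t. tree_rec n ch cN (\<lambda>l. t * x l) w / t) \<longlongrightarrow> tree_rec n ch cT x w) (at_right 0)"
        if "w \<in> ch v" for w
        using IH[OF chi[OF that]] .
      have lim: "((\<lambda>t. \<psi> v (\<Sum>w\<in>ch v. gen_inv (\<psi> v) (tree_rec n ch cN (\<lambda>l. t * x l) w)) / t)
          \<longlongrightarrow> (\<Sum>w\<in>ch v. tree_rec n ch cT x w powr (-1/\<alpha> v)) powr (-\<alpha> v)) (at_right 0)"
        by (rule key_lemma[OF g rvv al finC False]) (use IHw in auto)
      have "(\<Sum>w\<in>ch v. tree_rec n ch cT x w powr (-1/\<alpha> v)) > 0"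
      proof (rule sum_pos[OF finC False])
        fix w assume "w \<in> ch v"
        then have "tree_rec n ch cT x w > 0" using IHw by blast
        then show "0 < tree_rec n ch cT x w powr (-1/\<alpha> v)" by simp
      qed
      then have "(\<Sum>w\<in>ch v. tree_rec n ch cT x w powr (-1/\<alpha> v)) powr (-\<alpha> v) > 0" by simp
      then show ?thesis using lim False unfolding cN_def cT_def ch_def by simp
    qed
  qed
  then show ?case unfolding ch_def cN_def cT_def .
qed

theorem proposition4p5:
  fixes V :: "'a set" and r :: 'a and pa :: "'a \<Rightarrow> 'a"
    and \<psi> :: "'a \<Rightarrow> real \<Rightarrow> real" and \<alpha> :: "'a \<Rightarrow> real"
  assumes tree: "is_rooted_tree V r pa"
    and gen: "\<forall>v\<in>internal V r pa. archimedean_generator (\<psi> v) \<and> completely_monotone (\<psi> v)"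
    and nest: "\<forall>v\<in>internal V r pa - {r}. nesting_condition (\<psi> (pa v)) (\<psi> v)"
    and rv: "\<forall>v\<in>internal V r pa. \<alpha> v > 0 \<and> regularly_varying (\<psi> v) (- \<alpha> v)"
  shows "\<forall>v\<in>V. \<forall>x. (\<forall>l\<in>leaves_below V r pa v. 0 < x l) \<longrightarrow>
           ((\<lambda>t. nac V r pa \<psi> v (\<lambda>l. t * x l) / t) \<longlongrightarrow> tail_nac V r pa \<alpha> v x) (at_right 0)"
proof -
  have gen': "\<forall>v\<in>internal V r pa. archimedean_generator (\<psi> v)" using gen by blast
  note M = main_ind[OF tree gen' rv, of "card V"]
  show ?thesis unfolding nac_def tail_nac_def
    using M by auto
qed

end
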